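(* Let $\Lambda$ be a cohomology algebra of $b^+=1$ type with $I_T=0$ and $\Gamma\cong\langle1\rangle\oplus n\langle-1\rangle$, $0\le n\le 9$, with orthogonal basis $\{H,E_1,\dots,E_n\}$ of $\Lambda^2$, $H\cdot H=1$, $E_i\cdot E_i=-1$. Let $A=aH-\sum_{i=1}^n b_iE_i\ne0$ be reduced with $A\cdot A\ge0$. Then $c_0=3H-\sum_{i=1}^nE_i$ is an adjunction class and $$h(A)=h_{c_0}(A)=\frac{(a-1)(a-2)-\sum_{i=1}^n b_i(b_i-1)}{2}=\binom{a-1}{2}-\sum_{i=1}^n\binom{b_i}{2}.$$
   Context: Notation: $\Lambda$ a cohomology algebra (graded commutative algebra over $\mathbb{Z}$, free of finite rank in each degree, $p:\Lambda^4\cong\mathbb{Z}$ with perfect pairings $\Lambda^i\times\Lambda^{4-i}\to\mathbb{Z}$); $\Gamma(x,y)=x\cdot y=p(xy)$ on $\Lambda^2$, signature $\sigma$; $I_T\subseteq\Lambda^2$ is the subgroup generated by products of elements of $\Lambda^1$. Characteristic: $c\cdot A\equiv A\cdot A\pmod 2$ for all $A$. Since $I_T=0$, the adjunction classes are the characteristic classes $c$ with $c\cdot c>\sigma(\Lambda)$ (equivalently $c\cdot c\ge\sigma+8$). $h_c(A)=1+\frac{A\cdot A-|c\cdot A|}{2}$ for $A\ne0$, $h_c(0)=0$; $h(A)=\max_c h_c(A)$ over adjunction classes. $A=aH-\sum b_iE_i$ is reduced if $b_1\ge b_2\ge\dots\ge b_n\ge0$ and $a\ge b_1$ if $n=1$,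 $a\ge b_1+b_2$ if $n=2$, $a\ge b_1+b_2+b_3$ if $n\ge3$ ($a\ge0$ if $n=0$). *)

theory Defs
  imports Complex_Main
begin

text \<open>A class is a pair (a, b) with b a list of length n, standing for
  a H - (b!0) E_1 - ... - (b!(n-1)) E_n.  Since I_T = 0, only the
  intersection lattice enters the definitions of adjunction classes and h.\<close>

type_synonym cls = "int \<times> int list"

definition cls_in :: "nat \<Rightarrow> cls \<Rightarrow> bool" where
  "cls_in n A \<longleftrightarrow> length (snd A) = n"

definition dot :: "cls \<Rightarrow> cls \<Rightarrow> int" where
  "dot A B = fst A * fst B - sum_list (map2 (*) (snd A) (snd B))"

definition zero_cls :: "nat \<Rightarrow> cls" where
  "zero_cls n = (0, replicate n 0)"

definition signature :: "nat \<Rightarrow> int" where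
  "signature n = 1 - int n"

definition characteristic :: "nat \<Rightarrow> cls \<Rightarrow> bool" where
  "characteristic n c \<longleftrightarrow> cls_in n c \<and>
     (\<forall>A. cls_in n A \<longrightarrow> dot c A mod 2 = dot A A mod 2)"

definition adjunction_class :: "nat \<Rightarrow> cls \<Rightarrow> bool" where
  "adjunction_class n c \<longleftrightarrow> characteristic n c \<and> dot c c > signature n"

definition h_c :: "nat \<Rightarrow> cls \<Rightarrow> cls \<Rightarrow> int" where
  "h_c n c A = (if A = zero_cls n then 0 else 1 + (dot A A - \<bar>dot c A\<bar>) div 2)"

definition h :: "nat \<Rightarrow> cls \<Rightarrow> int" where
  "h n A = Sup {h_c n c A | c. adjunction_class n c}"

definition reduced :: "nat \<Rightarrow> cls \<Rightarrow> bool" where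
  "reduced n A \<longleftrightarrow> cls_in n A \<and>
     (let a = fst A; b = snd A in
       sorted_wrt (\<ge>) b \<and> (\<forall>x\<in>set b. x \<ge> 0) \<and>
       (if n = 0 then a \<ge> 0
        else if n = 1 then a \<ge> b!0
        else if n = 2 then a \<ge> b!0 + b!1
        else a \<ge> b!0 + b!1 + b!2))"

end

theory Submission imports Defs begin

lemma cs: fixes x :: "nat \<Rightarrow> int" shows "(\<Sum>i<k. x i)^2 \<le> int k * (\<Sum>i<k. x i * x i)"
proof -
  have "0 \<le> (\<Sum>i<k. \<Sum>j<k. (x i - x j)^2)" by (intro sum_nonneg) auto
  also have "\<dots> = (\<Sum>i<k. \<Sum>j<k. x i * x i + x j * x j - 2 * (x i * x j))"
    by (simp add: power2_eq_square algebra_simps)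
  also have "\<dots> = 2 * (int k * (\<Sum>i<k. x i * x i)) - 2 * (\<Sum>i<k. x i)^2"
    by (simp add: sum.distrib sum_subtractf sum_distrib_left sum_distrib_right power2_eq_square algebra_simps)
  finally show ?thesis by simp
qed

lemma c1: fixes p x :: int assumes "p > 0" "x > 0" "odd p" "odd x" "p*p \<ge> x*x+8" shows "x+2 \<le> p"
proof -
  have "x < p"
  proof (rule ccontr)
    assume "\<not> x < p" then have "p*p \<le> x*x" using assms by (simp add: mult_mono)
    then show False using assms by simp
  qed
  moreover have "even (p - x)" using assms by simp
  ultimately show ?thesis by presburger
qed

lemma c2: fixes p T Q :: int assumes "p > 0" "even T" "T^2 \<le> 2*Q" "p*p \<ge> Q+7" shows "T+4 \<le> 2*p"
proof -
  obtain m where m: "T = 2*m" using assms by blast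
  have "p*p \<ge> 2*m*m + 7" using assms m by (simp add: power2_eq_square)
  moreover have "2*m*m+7 > (m+1)*(m+1)"
  proof -
    have "(m-1)*(m-1) \<ge> 0" by simp
    then show ?thesis by (simp add: algebra_simps)
  qed
  ultimately have "p*p > (m+1)*(m+1)" by linarith
  then have "p > m+1"
  proof -
    assume a: "p*p > (m+1)*(m+1)"
    show ?thesis
    proof (rule ccontr)
      assume "\<not> p > m+1" then have "p*p \<le> (m+1)*(m+1)" using assms(1) by (intro mult_mono) auto
      then show False using a by simp
    qed
  qed
  then show ?thesis using m by simp
qed

lemma c3: fixes p T Q :: int assumes "p > 0" "T^2 \<le> 3*Q" "p*p \<ge> Q+6" shows "T+6 \<le> 3*p"
proof (rule ccontr)
  assume "\<not> T+6 \<le> 3*p"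
  then have h: "3*p \<le> T+5" by simp
  have "(3*p)*(3*p) \<le> (T+5)*(T+5)" using h assms(1) by (intro mult_mono) auto
  moreover have "9*(p*p) \<ge> 3*T^2 + 54" using assms by simp
  moreover have "(T-2)*(T-3) \<ge> 0"
    by (cases "T \<le> 2") (auto intro: mult_nonneg_nonneg mult_nonpos_nonpos)
  ultimately show False by (simp add: algebra_simps power2_eq_square)
qed

lemma c4: fixes p T Q :: int and k :: int assumes "p > 0" "4 \<le> k" "k \<le> 9" "T^2 \<le> k*Q" "p*p \<ge> Q+9-k" "T \<ge> k"
  shows "T+9-k \<le> 3*p"
proof -
  define d where "d = 9 - k"
  have d: "d \<ge> 0" "k + d = 9" using assms d_def by auto
  have "p*p \<ge> Q + d" using assms d_def by simp
  then have "(9*k)*(p*p) \<ge> (9*k)*(Q + d)" using assms by (intro mult_left_mono) auto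
  then have X: "k*(9*(p*p)) \<ge> 9*(k*Q) + 9*k*d" by (simp add: algebra_simps)
  have Y: "9*(k*Q) + 9*k*d \<ge> 9*T^2 + 9*k*d" using assms by simp
  from X Y have A: "k*(9*(p*p)) \<ge> 9*T^2 + 9*k*d" by linarith
  have B0: "(k+d)*T^2 + (k+d)*k*d - k*((T+d)*(T+d)) = d*((T-k)*(T-k))"
    by (simp add: algebra_simps power2_eq_square)
  have B: "9*T^2 + 9*k*d - k*((T+d)*(T+d)) = d*((T-k)*(T-k))"
    using B0 d(2) by simp
  have "d*((T-k)*(T-k)) \<ge> 0" using d by simp
  then have "k*(9*(p*p)) \<ge> k*((T+d)*(T+d))" using A B by linarith
  then have "9*(p*p) \<ge> (T+d)*(T+d)" using assms by (simp add: mult_le_cancel_left)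
  then have "(T+d)*(T+d) \<le> (3*p)*(3*p)" by simp
  then have "T+d \<le> 3*p"
  proof -
    assume a: "(T+d)*(T+d) \<le> (3*p)*(3*p)"
    show ?thesis
    proof (rule ccontr)
      assume "\<not> T+d \<le> 3*p" then have "(3*p)*(3*p) < (T+d)*(T+d)" using assms(1) by (intro mult_strict_mono) auto
      then show False using a by simp
    qed
  qed
  then show ?thesis using d_def by simp
qed


lemma sum_if3: "(\<Sum>(i::nat)<k. if i < 3 then f i else (0::int)) = (\<Sum>i<min k 3. f i)"
  by (induction k) (auto simp: min_def)

lemma maj:
  fixes d bb :: "nat \<Rightarrow> int"
  assumes "\<forall>k\<le>n. (\<Sum>i<k. d i) \<ge> 0" "\<forall>i j. i \<le> j \<longrightarrow> bb j \<le> bb i" "\<forall>i. bb i \<ge> 0"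
  shows "(\<Sum>i<n. d i * bb i) \<ge> (\<Sum>i<n. d i) * bb n"
  using assms(1)
proof (induction n)
  case 0 then show ?case by simp
next
  case (Suc n)
  have ih: "(\<Sum>i<n. d i * bb i) \<ge> (\<Sum>i<n. d i) * bb n" using Suc by auto
  have D: "(\<Sum>i<n. d i) \<ge> 0" using Suc.prems by auto
  have D1: "(\<Sum>i<Suc n. d i) \<ge> 0" using Suc.prems by auto
  have "(\<Sum>i<n. d i) * bb n \<ge> (\<Sum>i<n. d i) * bb (Suc n)"
    using D assms(2) by (simp add: mult_left_mono)
  moreover have "(\<Sum>i<Suc n. d i) * bb n \<ge> (\<Sum>i<Suc n. d i) * bb (Suc n)"
    using D1 assms(2) by (simp add: mult_left_mono)
  ultimately show ?case using ih by (simp add: algebra_simps)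
qed

lemma prefix:
  fixes p :: int and x :: "nat \<Rightarrow> int"
  assumes "p > 0" "odd p" "\<forall>i<k. odd (x i) \<and> x i > 0" "p*p \<ge> (\<Sum>i<k. x i * x i) + 9 - int k" "k \<le> 9"
  shows "(\<Sum>i<k. x i - 1) \<le> int (min k 3) * (p - 3)"
proof -
  define T where "T = (\<Sum>i<k. x i)"
  define Q where "Q = (\<Sum>i<k. x i * x i)"
  have S: "(\<Sum>i<k. x i - 1) = T - int k" unfolding T_def by (simp add: sum_subtractf)
  have cs': "T^2 \<le> int k * Q" unfolding T_def Q_def by (rule cs)
  consider "k=0" | "k=1" | "k=2" | "k=3" | "k\<ge>4" by linarith
  then show ?thesis
  proof cases
    case 1 then show ?thesis by simp
  next
    case 2
    have "x 0 + 2 \<le> p" using assms 2 by (intro c1) auto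
    then show ?thesis using 2 by simp
  next
    case 3
    have T2: "T = x 0 + x 1" using 3 unfolding T_def by (simp add: numeral_2_eq_2)
    have "even T" using T2 assms(3) 3 by auto
    then have "T + 4 \<le> 2*p" using assms 3 cs' unfolding Q_def by (intro c2) auto
    then show ?thesis using S 3 by simp
  next
    case 4
    have "T + 6 \<le> 3*p" using assms 4 cs' unfolding Q_def by (intro c3) auto
    then show ?thesis using S 4 by simp
  next
    case 5
    have "T \<ge> (\<Sum>i<k. 1)" unfolding T_def using assms(3) by (intro sum_mono) auto
    then have "T \<ge> int k" by simp
    then have "T + 9 - int k \<le> 3*p" using assms 5 cs' unfolding Q_def by (intro c4) auto
    then show ?thesis using S 5 by simp
  qed
qed

lemma core:
  fixes p a :: int and x bb :: "nat \<Rightarrow> int"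
  assumes "p > 0" "odd p" "\<forall>i<n. odd (x i) \<and> x i > 0" "p*p \<ge> (\<Sum>i<n. x i * x i) + 9 - int n" "n \<le> 9"
    "\<forall>i j. i \<le> j \<longrightarrow> bb j \<le> bb i" "\<forall>i. bb i \<ge> 0" "a \<ge> bb 0 + bb 1 + bb 2"
  shows "p*a - (\<Sum>i<n. x i * bb i) \<ge> 3*a - (\<Sum>i<n. bb i)"
proof -
  have pk: "p*p \<ge> (\<Sum>i<k. x i * x i) + 9 - int k" if "k \<le> n" for k
  proof -
    have "(\<Sum>i<n. x i * x i) = (\<Sum>i<k. x i * x i) + (\<Sum>i\<in>{k..<n}. x i * x i)"
      by (metis atLeast0LessThan sum.atLeastLessThan_concat le0 that)
    moreover have "(\<Sum>i\<in>{k..<n}. x i * x i) \<ge> (\<Sum>i\<in>{k..<n}. 1)"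
    proof (intro sum_mono)
      fix i assume "i \<in> {k..<n}"
      then have "x i \<ge> 1" using assms(3) by auto
      then show "1 \<le> x i * x i" by (metis mult_le_cancel_left1 order_trans zero_less_one_class.zero_le_one linorder_not_le less_le_trans)
    qed
    ultimately show ?thesis using assms(4) that by simp
  qed
  have p3: "p \<ge> 3"
  proof (rule ccontr)
    assume "\<not> p \<ge> 3" then have "p*p \<le> 2*2" using assms(1) by (intro mult_mono) auto
    then show False using pk[of 0] by simp
  qed
  define d where "d i = (if i<3 then p-3 else 0) - (x i - 1)" for i
  have dpos: "\<forall>k\<le>n. (\<Sum>i<k. d i) \<ge> 0"
  proof (intro allI impI)
    fix k assume k: "k \<le> n"
    have "(\<Sum>i<k. d i) = (\<Sum>i<k. if i<3 then p-3 else 0) - (\<Sum>i<k. x i - 1)"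
      unfolding d_def by (simp add: sum_subtractf)
    also have "(\<Sum>i<k. if i<3 then p-3 else 0) = int (min k 3) * (p - 3)"
      by (simp add: sum_if3)
    finally show "(\<Sum>i<k. d i) \<ge> 0" using prefix[of p k x] assms k pk[OF k] by simp
  qed
  have M: "(\<Sum>i<n. d i * bb i) \<ge> (\<Sum>i<n. d i) * bb n"
    using maj[OF dpos assms(6,7)] .
  have "(\<Sum>i<n. d i) * bb n \<ge> 0" using dpos assms(7) by simp
  then have M2: "(\<Sum>i<n. d i * bb i) \<ge> 0" using M by linarith
  have E: "(\<Sum>i<n. d i * bb i) = (p-3) * (\<Sum>i<min n 3. bb i) - (\<Sum>i<n. (x i - 1) * bb i)"
  proof -
    have "(\<Sum>i<n. d i * bb i) = (\<Sum>i<n. (if i<3 then (p-3) * bb i else 0)) - (\<Sum>i<n. (x i - 1) * bb i)"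
      unfolding sum_subtractf[symmetric] by (rule sum.cong) (auto simp: d_def algebra_simps)
    also have "(\<Sum>i<n. (if i<3 then (p-3) * bb i else 0)) = (\<Sum>i<min n 3. (p-3) * bb i)"
      by (rule sum_if3)
    finally show ?thesis by (simp add: sum_distrib_left)
  qed
  have B3: "(\<Sum>i<min n 3. bb i) \<le> bb 0 + bb 1 + bb 2"
  proof -
    consider "min n 3 = 0" | "min n 3 = 1" | "min n 3 = 2" | "min n 3 = 3" by linarith
    then show ?thesis using assms(7)
      by cases (simp_all add: numeral_3_eq_3 numeral_2_eq_2 add_nonneg_nonneg)
  qed
  have "(p-3) * (\<Sum>i<min n 3. bb i) \<le> (p-3) * a"
    using B3 assms(8) p3 by (intro mult_left_mono) auto
  then have F: "(\<Sum>i<n. (x i - 1) * bb i) \<le> (p-3)*a" using M2 E by linarith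
  have "(\<Sum>i<n. x i * bb i) = (\<Sum>i<n. (x i - 1) * bb i) + (\<Sum>i<n. bb i)"
    by (simp add: sum.distrib[symmetric] algebra_simps)
  then show ?thesis using F by (simp add: algebra_simps)
qed


lemma dotn: "length xs = length ys \<Longrightarrow> dot (a, xs) (c, ys) = a*c - (\<Sum>i<length xs. xs!i * ys!i)"
  by (simp add: dot_def sum_list_sum_nth atLeast0LessThan)

lemma list_sum_nth: "sum_list (map f xs) = (\<Sum>i<length xs. f (xs!i))"
  by (simp add: sum_list_sum_nth atLeast0LessThan)

lemma gch2: "(x::real) gchoose 2 = x * (x - 1) / 2"
  by (simp add: gbinomial_Suc numeral_2_eq_2)

lemma odd_sq8: "odd (x::int) \<Longrightarrow> 8 dvd (x*x - 1)"
proof -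
  assume "odd x" then obtain k where "x = 2*k+1" by (metis oddE)
  then have "x*x - 1 = 4*(k*(k+1))" by (simp add: algebra_simps)
  moreover have "even (k*(k+1))" by simp
  ultimately show ?thesis by fastforce
qed

lemma c0_char: "characteristic n (3, replicate n 1)"
  unfolding characteristic_def cls_in_def
proof (intro conjI allI impI)
  fix A :: cls assume L: "length (snd A) = n"
  obtain a' b' where A: "A = (a', b')" by fastforce
  have e1: "dot (3, replicate n 1) A = 3*a' - (\<Sum>i<n. b'!i)" using L A by (simp add: dotn)
  have e2: "dot A A = a'*a' - (\<Sum>i<n. b'!i * b'!i)" using L A by (simp add: dotn)
  have "dot (3, replicate n 1) A - dot A A = (3*a' - a'*a') + (\<Sum>i<n. b'!i * b'!i - b'!i)"
    using e1 e2 by (simp add: sum_subtractf)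
  moreover have "even (3*a' - a'*a')" by auto
  moreover have "even (\<Sum>i<n. b'!i * b'!i - b'!i)" by (intro dvd_sum) auto
  ultimately have "even (dot (3, replicate n 1) A - dot A A)" by simp
  then show "dot (3, replicate n 1) A mod 2 = dot A A mod 2" by (simp add: mod_eq_dvd_iff)
qed simp

lemma c0_adj: "adjunction_class n (3, replicate n 1)"
  unfolding adjunction_class_def using c0_char by (simp add: dotn signature_def)

lemma adj_props:
  assumes "adjunction_class n (al, be)"
  shows "length be = n" "odd al" "\<forall>i<n. odd (be!i)" "al*al \<ge> (\<Sum>i<n. be!i * be!i) + 9 - int n"
proof -
  have ch: "characteristic n (al, be)" and gt: "dot (al, be) (al, be) > 1 - int n"
    using assms by (auto simp: adjunction_class_def signature_def)
  show L: "length be = n" using ch by (simp add: characteristic_def cls_in_def)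
  have T: "\<And>A. cls_in n A \<Longrightarrow> dot (al, be) A mod 2 = dot A A mod 2"
    using ch unfolding characteristic_def by blast
  have "dot (al, be) (1, replicate n 0) mod 2 = dot (1, replicate n 0) (1, replicate n 0) mod 2"
    by (rule T) (simp add: cls_in_def)
  then have "al mod 2 = 1" using L by (simp add: dotn)
  then show oa: "odd al" by presburger
  show ob: "\<forall>i<n. odd (be!i)"
  proof (intro allI impI)
    fix i assume i: "i < n"
    let ?v = "(replicate n (0::int))[i := 1]"
    have vn: "\<And>j. j < n \<Longrightarrow> ?v ! j = (if j = i then 1 else 0)" using i by (simp add: nth_list_update)
    have s1: "(\<Sum>j<n. be!j * ?v!j) = (\<Sum>j<n. if j = i then be!i else 0)"
      by (rule sum.cong) (auto simp: vn)
    have s2: "(\<Sum>j<n. ?v!j * ?v!j) = (\<Sum>j<n. if j = i then 1 else 0)"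
      by (rule sum.cong) (auto simp: vn)
    have "dot (al, be) (0, ?v) mod 2 = dot (0, ?v) (0, ?v) mod 2"
      by (rule T) (simp add: cls_in_def)
    then have "(- be!i) mod 2 = (-1) mod 2" using L i s1 s2 by (simp add: dotn)
    then show "odd (be!i)" by presburger
  qed
  have dcc: "dot (al, be) (al, be) = al*al - (\<Sum>i<n. be!i * be!i)" using L by (simp add: dotn)
  have E: "dot (al, be) (al, be) - (1 - int n) = (al*al - 1) - (\<Sum>i<n. be!i * be!i - 1)"
    using dcc by (simp add: sum_subtractf)
  have d1: "8 dvd (al*al - 1)" using oa by (rule odd_sq8)
  have d2: "8 dvd (\<Sum>i<n. be!i * be!i - 1)" using ob by (intro dvd_sum) (auto intro: odd_sq8)
  have "8 dvd (dot (al, be) (al, be) - (1 - int n))" unfolding E using d1 d2 by (rule dvd_diff)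
  then have "dot (al, be) (al, be) - (1 - int n) \<ge> 8" using gt by (metis zdvd_imp_le diff_gt_0_iff_gt)
  then show "al*al \<ge> (\<Sum>i<n. be!i * be!i) + 9 - int n" using dcc by simp
qed

lemma c0pos:
  fixes bb :: "nat \<Rightarrow> int"
  assumes "n \<le> 9" "\<forall>i j. i \<le> j \<longrightarrow> bb j \<le> bb i" "\<forall>i. bb i \<ge> 0" "a \<ge> bb 0 + bb 1 + bb 2"
  shows "(\<Sum>i<n. bb i) \<le> 3*a"
proof -
  define d where "d i = (if i<3 then (3::int) else 0) - 1" for i :: nat
  have dpos: "\<forall>k\<le>n. (\<Sum>i<k. d i) \<ge> 0"
  proof (intro allI impI)
    fix k assume k: "k \<le> n"
    have "(\<Sum>i<k. d i) = (\<Sum>i<k. if i<3 then 3 else 0) - int k"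
      unfolding d_def by (simp add: sum_subtractf)
    also have "(\<Sum>i<k. if i<3 then (3::int) else 0) = 3 * int (min k 3)"
      by (simp add: sum_if3)
    finally show "(\<Sum>i<k. d i) \<ge> 0" using k assms(1) by simp
  qed
  have M: "(\<Sum>i<n. d i * bb i) \<ge> (\<Sum>i<n. d i) * bb n"
    using maj[OF dpos assms(2,3)] .
  have "(\<Sum>i<n. d i) * bb n \<ge> 0" using dpos assms(3) by simp
  then have M2: "(\<Sum>i<n. d i * bb i) \<ge> 0" using M by linarith
  have E: "(\<Sum>i<n. d i * bb i) = 3 * (\<Sum>i<min n 3. bb i) - (\<Sum>i<n. bb i)"
  proof -
    have "(\<Sum>i<n. d i * bb i) = (\<Sum>i<n. (if i<3 then 3 * bb i else 0)) - (\<Sum>i<n. bb i)"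
      unfolding sum_subtractf[symmetric] by (rule sum.cong) (auto simp: d_def algebra_simps)
    also have "(\<Sum>i<n. (if i<3 then 3 * bb i else 0)) = (\<Sum>i<min n 3. 3 * bb i)"
      by (rule sum_if3)
    finally show ?thesis by (simp add: sum_distrib_left)
  qed
  have B3: "(\<Sum>i<min n 3. bb i) \<le> bb 0 + bb 1 + bb 2"
  proof -
    consider "min n 3 = 0" | "min n 3 = 1" | "min n 3 = 2" | "min n 3 = 3" by linarith
    then show ?thesis using assms(3)
      by cases (simp_all add: numeral_3_eq_3 numeral_2_eq_2 add_nonneg_nonneg)
  qed
  show ?thesis using M2 E B3 assms(4) by linarith
qed

theorem mainTheorem9:
  fixes n :: nat and a :: int and b :: "int list"
  assumes "n \<le> 9"
    and "length b = n"
    and "(a, b) \<noteq> zero_cls n"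
    and "reduced n (a, b)"
    and "dot (a, b) (a, b) \<ge> 0"
  shows "adjunction_class n (3, replicate n 1)
    \<and> h n (a, b) = h_c n (3, replicate n 1) (a, b)
    \<and> real_of_int (h_c n (3, replicate n 1) (a, b))
        = ((real_of_int a - 1) * (real_of_int a - 2)
           - (\<Sum>x\<leftarrow>b. real_of_int x * (real_of_int x - 1))) / 2
    \<and> real_of_int (h_c n (3, replicate n 1) (a, b))
        = ((real_of_int a - 1) gchoose 2) - (\<Sum>x\<leftarrow>b. real_of_int x gchoose 2)"
proof -
  let ?c0 = "(3::int, replicate n (1::int))"
  define bb where "bb i = (if i < n then b!i else 0)" for i
  have red: "sorted_wrt (\<ge>) b" "\<forall>x\<in>set b. x \<ge> 0"
    "if n = 0 then a \<ge> 0 else if n = 1 then a \<ge> b!0 else if n = 2 then a \<ge> b!0 + b!1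
     else a \<ge> b!0 + b!1 + b!2"
    using assms(4) by (auto simp: reduced_def Let_def)
  have bbnn: "\<forall>i. bb i \<ge> 0" using red(2) assms(2) by (auto simp: bb_def)
  have bbmono: "\<forall>i j. i \<le> j \<longrightarrow> bb j \<le> bb i"
  proof (intro allI impI)
    fix i j :: nat assume ij: "i \<le> j"
    show "bb j \<le> bb i"
    proof (cases "j < n")
      case True
      then show ?thesis using ij red(1) assms(2)
        by (cases "i = j") (auto simp: bb_def sorted_wrt_iff_nth_less)
    next
      case False then show ?thesis using bbnn by (simp add: bb_def)
    qed
  qed
  have a3: "a \<ge> bb 0 + bb 1 + bb 2"
  proof -
    consider "n = 0" | "n = 1" | "n = 2" | "n \<ge> 3" by linarith
    then show ?thesis using red(3) by cases (auto simp: bb_def)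
  qed
  have bsum: "\<And>f. (\<Sum>i<n. f (b!i)) = (\<Sum>i<n. f (bb i))" by (rule sum.cong) (auto simp: bb_def)
  have apos: "a \<ge> 0" using a3 bbnn by (metis add_nonneg_nonneg order_trans)
  have dc0: "dot ?c0 (a, b) = 3*a - (\<Sum>i<n. bb i)"
    using assms(2) bsum[of "\<lambda>x. x"] by (simp add: dotn)
  have dc0pos: "dot ?c0 (a, b) \<ge> 0" using dc0 c0pos[OF assms(1) bbmono bbnn a3] by simp
  have dAA: "dot (a, b) (a, b) = a*a - (\<Sum>i<n. bb i * bb i)"
    using assms(2) bsum[of "\<lambda>x. x*x"] by (simp add: dotn)
  have hc0: "h_c n ?c0 (a, b) = 1 + (dot (a, b) (a, b) - dot ?c0 (a, b)) div 2"
    using assms(3) dc0pos by (simp add: h_c_def)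
  have le: "h_c n c (a, b) \<le> h_c n ?c0 (a, b)" if adj: "adjunction_class n c" for c
  proof -
    obtain al be where c: "c = (al, be)" by fastforce
    note P = adj_props[OF adj[unfolded c]]
    have dc: "dot c (a, b) = al*a - (\<Sum>i<n. be!i * bb i)"
      using P(1) assms(2) c by (simp add: dotn bb_def)
    have S: "\<bar>\<Sum>i<n. be!i * bb i\<bar> \<le> (\<Sum>i<n. \<bar>be!i\<bar> * bb i)"
    proof -
      have "\<bar>\<Sum>i<n. be!i * bb i\<bar> \<le> (\<Sum>i<n. \<bar>be!i * bb i\<bar>)" by (rule sum_abs)
      also have "\<dots> = (\<Sum>i<n. \<bar>be!i\<bar> * bb i)" using bbnn by (simp add: abs_mult)
      finally show ?thesis .
    qed
    have "\<bar>al*a\<bar> = \<bar>al\<bar> * a" using apos by (simp add: abs_mult)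
    then have G: "\<bar>dot c (a, b)\<bar> \<ge> \<bar>al\<bar> * a - (\<Sum>i<n. \<bar>be!i\<bar> * bb i)"
      using dc S by linarith
    have oab: "\<forall>i<n. odd \<bar>be!i\<bar> \<and> \<bar>be!i\<bar> > 0" using P(3) by (auto simp: odd_pos)
    have pal: "\<bar>al\<bar> > 0" using P(2) by (auto simp: odd_pos)
    have K: "\<bar>al\<bar> * a - (\<Sum>i<n. \<bar>be!i\<bar> * bb i) \<ge> 3*a - (\<Sum>i<n. bb i)"
      using P(4) by (intro core[OF pal _ oab _ assms(1) bbmono bbnn a3]) (auto simp: P(2) abs_mult_self_eq)
    have "\<bar>dot c (a, b)\<bar> \<ge> dot ?c0 (a, b)" using G K dc0 by linarith
    then have "(dot (a, b) (a, b) - \<bar>dot c (a, b)\<bar>) div 2 \<le> (dot (a, b) (a, b) - dot ?c0 (a, b)) div 2"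
      by (intro zdiv_mono1) auto
    then show ?thesis using hc0 assms(3) by (simp add: h_c_def)
  qed
  have hh: "h n (a, b) = h_c n ?c0 (a, b)"
    unfolding h_def by (rule cSup_eq_maximum) (use c0_adj le in auto)
  define X where "X = dot (a, b) (a, b) - dot ?c0 (a, b)"
  have X: "X = a*a - 3*a - (\<Sum>i<n. bb i * bb i - bb i)"
    unfolding X_def dAA dc0 by (simp add: sum_subtractf)
  have "even (a*a - 3*a)" by auto
  moreover have "even (\<Sum>i<n. bb i * bb i - bb i)" by (intro dvd_sum) auto
  ultimately have "even X" using X by simp
  then have "2 * (X div 2) = X" by simp
  then have I: "2 * h_c n ?c0 (a, b) = (a-1)*(a-2) - (\<Sum>i<n. bb i * (bb i - 1))"
    using hc0 X unfolding X_def[symmetric] by (simp add: algebra_simps sum_subtractf)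
  have L1: "(\<Sum>x\<leftarrow>b. real_of_int x * (real_of_int x - 1)) = real_of_int (\<Sum>i<n. bb i * (bb i - 1))"
  proof -
    have "(\<Sum>x\<leftarrow>b. real_of_int x * (real_of_int x - 1)) = (\<Sum>i<n. real_of_int (bb i) * (real_of_int (bb i) - 1))"
      unfolding list_sum_nth assms(2) by (rule sum.cong) (auto simp: bb_def)
    then show ?thesis by simp
  qed
  have R: "real_of_int (h_c n ?c0 (a, b))
        = ((real_of_int a - 1) * (real_of_int a - 2)
           - (\<Sum>x\<leftarrow>b. real_of_int x * (real_of_int x - 1))) / 2"
  proof -
    have "real_of_int (2 * h_c n ?c0 (a, b)) = real_of_int ((a-1)*(a-2) - (\<Sum>i<n. bb i * (bb i - 1)))"
      using I by simp
    then show ?thesis unfolding L1 by simp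
  qed
  have G: "(\<Sum>x\<leftarrow>b. real_of_int x gchoose 2) = (\<Sum>x\<leftarrow>b. real_of_int x * (real_of_int x - 1)) / 2"
    by (simp add: gch2 list_sum_nth sum_divide_distrib)
  show ?thesis using c0_adj hh R G by (simp add: gch2 diff_divide_distrib)
qed

end
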